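(* Let $\mathcal S$ be an $\epsilon$-sample of $\mathcal C$ with $0<\epsilon\le1$. Let $a,b\in\mathcal S$ with $a\to b$ and let $p\in(a,b)$. Then $d_p=\min\{d(p,a),d(p,b)\}$, and $d_p<d(p,s)$ for all $s\in\mathcal S\setminus\{a,b\}$.
   Context: $\mathcal C\subset\mathbb R^d$ ($d\ge2$) is a finite union of pairwise disjoint closed curves (images of injective continuous maps $S^1\to\mathbb R^d$); $\mathcal S\subset\mathcal C$ is finite. The medial axis $\mathcal M$ is the set of points with no unique closest point in $\mathcal C$, $\mathrm{lfs}(p)=d(p,\mathcal M)$, and $\mathcal S$ is an $\epsilon$-sample if $d(p,\mathcal S)<\epsilon\,\mathrm{lfs}(p)$ for all $p\in\mathcal C$. For $p\in\mathcal C$, $d_p=d(p,\mathcal S)$. For sample points, $a\to b$ means: for a chosen orientation of the component of $\mathcal C$ containing $a,b$, moving from $a$ along the orientation, the next sample point met is $b$. With this orientation, $(a,b)$ denotes the open arc from $a$ to $b$ along the orientation. *)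

theory Defs
  imports "HOL-Analysis.Analysis"
begin

definition medial_axis :: "'a::euclidean_space set \<Rightarrow> 'a set" where
  "medial_axis C = {x. \<not> (\<exists>!c. c \<in> C \<and> (\<forall>c'\<in>C. dist x c \<le> dist x c'))}"

definition lfs :: "'a::euclidean_space set \<Rightarrow> 'a \<Rightarrow> real" where
  "lfs C p = infdist p (medial_axis C)"

definition eps_sample :: "'a::euclidean_space set \<Rightarrow> 'a set \<Rightarrow> real \<Rightarrow> bool" where
  "eps_sample C S \<epsilon> \<longleftrightarrow> finite S \<and> S \<subseteq> C \<and> (\<forall>p\<in>C. infdist p S < \<epsilon> * lfs C p)"

text \<open>A closed curve is parametrised by an injective continuous map on the unit circle
  (of the complex plane); its orientation is the counterclockwise one of the parameter.
  The open arc from a to b along this orientation (for a = b: the whole curve minus a).\<close>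
definition open_arc :: "(complex \<Rightarrow> 'a) \<Rightarrow> 'a \<Rightarrow> 'a \<Rightarrow> 'a set" where
  "open_arc \<gamma> a b = {p. \<exists>\<alpha> \<delta> t. \<gamma> (cis \<alpha>) = a \<and> 0 < \<delta> \<and> \<delta> \<le> 2 * pi \<and>
      \<gamma> (cis (\<alpha> + \<delta>)) = b \<and> 0 < t \<and> t < \<delta> \<and> p = \<gamma> (cis (\<alpha> + t))}"

definition next_sample :: "(complex \<Rightarrow> 'a) \<Rightarrow> 'a set \<Rightarrow> 'a \<Rightarrow> 'a \<Rightarrow> bool" where
  "next_sample \<gamma> S a b \<longleftrightarrow> a \<in> S \<and> b \<in> S \<and> a \<in> \<gamma> ` sphere 0 1 \<and> b \<in> \<gamma> ` sphere 0 1 \<and>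
      open_arc \<gamma> a b \<inter> S = {}"

end

theory Submission
  imports Defs
begin


lemma cis_inj02:
  assumes "0 \<le> u" "u < 2*pi" "0 \<le> v" "v < 2*pi" "cis u = cis v" shows "u = v"
proof -
  have 1: "Arg2pi (cis u) = u" by (rule Arg2pi_unique[of 1]) (use assms(1-4) in \<open>simp_all add: cis_conv_exp\<close>)
  have 2: "Arg2pi (cis v) = v" by (rule Arg2pi_unique[of 1]) (use assms(1-4) in \<open>simp_all add: cis_conv_exp\<close>)
  have "u = Arg2pi (cis u)" using 1 by simp
  also have "\<dots> = Arg2pi (cis v)" using assms(5) by (rule arg_cong)
  also have "\<dots> = v" by (rule 2)
  finally show ?thesis .
qed

lemma cis_shift_eq:
  assumes "cis (\<alpha> + u) = cis (\<alpha> + v)" shows "cis u = cis v"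
proof -
  have "cis (-\<alpha>) * cis (\<alpha> + u) = cis (-\<alpha>) * cis (\<alpha> + v)" using assms by simp
  thus ?thesis by (simp add: cis_mult)
qed

lemma sphere_cis:
  assumes "z \<in> sphere (0::complex) 1" shows "\<exists>u. 0 \<le> u \<and> u < 2*pi \<and> z = cis (\<alpha> + u)"
proof -
  define w where "w = z * cis (-\<alpha>)"
  have nw: "norm w = 1" using assms by (simp add: w_def norm_mult)
  have A: "0 \<le> Arg2pi w \<and> Arg2pi w < 2*pi \<and> is_Arg w (Arg2pi w)" by (rule Arg2pi)
  have wc: "cis (Arg2pi w) = w" using A nw by (simp add: is_Arg_def cis_conv_exp)
  have "cis (\<alpha> + Arg2pi w) = cis \<alpha> * cis (Arg2pi w)" by (simp add: cis_mult)
  also have "\<dots> = cis \<alpha> * (z * cis (-\<alpha>))" by (simp only: wc, simp only: w_def)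
  also have "\<dots> = z * (cis \<alpha> * cis (-\<alpha>))" by (simp only: ac_simps)
  also have "\<dots> = z" by (simp add: cis_mult)
  finally have "z = cis (\<alpha> + Arg2pi w)" by simp
  thus ?thesis using A by blast
qed



lemma key_contra:
  fixes C :: "'a::euclidean_space set"
  assumes "compact C" "p \<in> C" "s \<in> C" "s \<noteq> a" "s \<noteq> b"
    "dist p s \<le> dist p a" "dist p s \<le> dist p b" "dist p s < lfs C p"
    "closed E1" "closed E2" "C \<subseteq> E1 \<union> E2" "E1 \<inter> E2 \<subseteq> {a,b}" "p \<in> E1" "s \<in> E2"
  shows False
proof -
  define seg where "seg = closed_segment p s"
  define \<pi> where "\<pi> x = (THE c. c\<in>C \<and> (\<forall>c'\<in>C. dist x c \<le> dist x c'))" for x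
  have uniq: "\<exists>!c. c\<in>C \<and> (\<forall>c'\<in>C. dist x c \<le> dist x c')" if "x \<in> seg" for x
  proof (rule ccontr)
    assume "\<not> ?thesis"
    hence "x \<in> medial_axis C" by (simp add: medial_axis_def)
    hence "infdist p (medial_axis C) \<le> dist p x" by (rule infdist_le)
    moreover have "dist p x \<le> dist p s" using that unfolding seg_def
      using dist_in_closed_segment[of x p s] by (simp add: dist_commute)
    ultimately show False using assms(8) by (simp add: lfs_def)
  qed
  have pi: "\<pi> x \<in> C \<and> (\<forall>c'\<in>C. dist x (\<pi> x) \<le> dist x c')" if "x \<in> seg" for x
    unfolding \<pi>_def using theI'[OF uniq[OF that]] .
  have piu: "\<pi> x = c" if "x \<in> seg" "c \<in> C" "\<forall>c'\<in>C. dist x c \<le> dist x c'" for x c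
    using uniq[OF that(1)] pi[OF that(1)] that(2,3) by blast
  have graph: "(\<lambda>x. (x, \<pi> x)) ` seg = (seg \<times> C) \<inter> {z. dist (fst z) (snd z) \<le> infdist (fst z) C}"
  proof (intro set_eqI iffI)
    fix z assume "z \<in> (\<lambda>x. (x, \<pi> x)) ` seg"
    then obtain x where x: "x \<in> seg" "z = (x, \<pi> x)" by auto
    have "dist x (\<pi> x) \<le> infdist x C"
      using pi[OF x(1)] assms(2) by (subst infdist_notempty) (auto intro!: cINF_greatest)
    thus "z \<in> (seg \<times> C) \<inter> {z. dist (fst z) (snd z) \<le> infdist (fst z) C}" using x pi by auto
  next
    fix z assume z: "z \<in> (seg \<times> C) \<inter> {z. dist (fst z) (snd z) \<le> infdist (fst z) C}"
    obtain x c where xc: "z = (x,c)" by fastforce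
    have "\<forall>c'\<in>C. dist x c \<le> dist x c'" using z xc
      by (auto intro: order_trans[OF _ infdist_le])
    hence "\<pi> x = c" using z xc piu by auto
    thus "z \<in> (\<lambda>x. (x, \<pi> x)) ` seg" using z xc by auto
  qed
  have "closed ((\<lambda>x. (x, \<pi> x)) ` seg)"
    unfolding graph
    by (intro closed_Int closed_Times closed_Collect_le continuous_intros)
       (auto simp: seg_def compact_imp_closed assms(1))
  hence cont: "continuous_on seg \<pi>"
    by (intro continuous_from_closed_graph[OF assms(1)]) (use pi in auto)
  define P where "P = \<pi> ` seg"
  have conP: "connected P" unfolding P_def seg_def
    by (rule connected_continuous_image) (use cont seg_def in auto)
  have PC: "P \<subseteq> C" using pi unfolding P_def by auto
  have "\<pi> p = p" by (rule piu) (auto simp: seg_def assms(2))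
  hence pP: "p \<in> P" unfolding P_def seg_def by force
  have "\<pi> s = s" by (rule piu) (auto simp: seg_def assms(3))
  hence sP: "s \<in> P" unfolding P_def seg_def by force
  have notab: "\<pi> x \<noteq> e" if "x \<in> seg" "e \<in> {a,b}" for x e
  proof
    assume eq: "\<pi> x = e"
    have d1: "dist x e \<le> dist x s" using pi[OF that(1)] eq assms(3) by auto
    have d2: "dist p x + dist x s = dist p s" using that(1) unfolding seg_def
      by (metis between_mem_segment between dist_commute) 
    have d3: "dist p s \<le> dist p e" using that(2) assms(6,7) by auto
    have "dist p e \<le> dist p x + dist x e" by (rule dist_triangle)
    hence "dist x e = dist x s" using d1 d2 d3 by linarith
    hence "\<forall>c'\<in>C. dist x s \<le> dist x c'" using pi[OF that(1)] eq by auto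
    hence "\<pi> x = s" using piu that(1) assms(3) by blast
    thus False using eq that(2) assms(4,5) by auto
  qed
  have "P \<inter> {a,b} = {}" using notab unfolding P_def by blast
  hence "E1 \<inter> E2 \<inter> P = {}" using assms(12) by blast
  moreover have "P \<subseteq> E1 \<union> E2" using PC assms(11) by blast
  ultimately show False using conP pP sP assms(9,10,13,14)
    unfolding connected_closed by blast
qed



theorem lemma3p4:
  fixes \<Gamma> :: "(complex \<Rightarrow> 'a::euclidean_space) set"
    and C S :: "'a set" and \<epsilon> :: real and \<gamma> :: "complex \<Rightarrow> 'a" and a b p :: 'a
  assumes "DIM('a) \<ge> 2"
    and "finite \<Gamma>"
    and "\<And>g. g \<in> \<Gamma> \<Longrightarrow> continuous_on (sphere 0 1) g \<and> inj_on g (sphere 0 1)"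
    and "\<And>g h. g \<in> \<Gamma> \<Longrightarrow> h \<in> \<Gamma> \<Longrightarrow> g \<noteq> h \<Longrightarrow> g ` sphere 0 1 \<inter> h ` sphere 0 1 = {}"
    and "C = (\<Union>g\<in>\<Gamma>. g ` sphere 0 1)"
    and "eps_sample C S \<epsilon>"
    and "0 < \<epsilon>" and "\<epsilon> \<le> 1"
    and "\<gamma> \<in> \<Gamma>"
    and "next_sample \<gamma> S a b"
    and "p \<in> open_arc \<gamma> a b"
  shows "infdist p S = min (dist p a) (dist p b) \<and> (\<forall>s \<in> S - {a, b}. infdist p S < dist p s)"
proof -
  obtain \<alpha> \<delta> t where ab: "\<gamma> (cis \<alpha>) = a" "0<\<delta>" "\<delta> \<le> 2*pi" "\<gamma> (cis(\<alpha>+\<delta>)) = b"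
      "0<t" "t<\<delta>" "p = \<gamma> (cis(\<alpha>+t))"
    using assms(11) unfolding open_arc_def by blast
  have S: "finite S" "S \<subseteq> C" "\<forall>q\<in>C. infdist q S < \<epsilon> * lfs C q"
    using assms(6) unfolding eps_sample_def by auto
  have aS: "a\<in>S" "b\<in>S" and disj: "open_arc \<gamma> a b \<inter> S = {}"
    using assms(10) unfolding next_sample_def by auto
  have cs: "cis x \<in> sphere 0 1" for x by simp
  have gC: "\<gamma> ` sphere 0 1 \<subseteq> C" using assms(5,9) by auto
  have pC: "p\<in>C" using ab(7) gC cs by auto
  have contg: "continuous_on (sphere 0 1) \<gamma>" and injg: "inj_on \<gamma> (sphere 0 1)"
    using assms(3)[OF assms(9)] by auto
  have cg: "compact (g ` sphere 0 1)" if "g \<in> \<Gamma>" for g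
    using compact_continuous_image[OF conjunct1[OF assms(3)[OF that]] compact_sphere] .
  have compC: "compact C" unfolding assms(5)
    by (rule compact_UN[OF assms(2)]) (rule cg)
  define E1 where "E1 = \<gamma> ` (\<lambda>u. cis(\<alpha>+u)) ` {0..\<delta>}"
  define E2 where "E2 = \<gamma> ` (\<lambda>u. cis(\<alpha>+u)) ` {\<delta>..2*pi} \<union> (\<Union>g\<in>\<Gamma>-{\<gamma>}. g ` sphere 0 1)"
  have cpt: "compact (\<gamma> ` (\<lambda>u. cis(\<alpha>+u)) ` {x..y})" for x y
  proof -
    have "continuous_on {x..y} (\<lambda>u. cis(\<alpha>+u))" by (intro continuous_intros)
    hence c1: "compact ((\<lambda>u. cis(\<alpha>+u)) ` {x..y})" by (rule compact_continuous_image) auto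
    show ?thesis
      by (rule compact_continuous_image[OF continuous_on_subset[OF contg] c1]) auto
  qed
  have clE1: "closed E1" unfolding E1_def by (rule compact_imp_closed[OF cpt])
  have clE2: "closed E2" unfolding E2_def
  proof (intro closed_Un compact_imp_closed[OF cpt] closed_UN ballI)
    show "finite (\<Gamma> - {\<gamma>})" using assms(2) by simp
    fix g assume "g \<in> \<Gamma> - {\<gamma>}"
    thus "closed (g ` sphere 0 1)" using cg compact_imp_closed by blast
  qed
  have CE: "C \<subseteq> E1 \<union> E2"
  proof
    fix x assume "x \<in> C"
    then obtain g z where gz: "g \<in> \<Gamma>" "z \<in> sphere 0 1" "x = g z" using assms(5) by auto
    show "x \<in> E1 \<union> E2"
    proof (cases "g = \<gamma>")
      case True
      obtain u where u: "0 \<le> u" "u < 2*pi" "z = cis (\<alpha> + u)" using sphere_cis[OF gz(2)] by blast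
      show ?thesis
      proof (cases "u \<le> \<delta>")
        case True thus ?thesis using u gz \<open>g = \<gamma>\<close> unfolding E1_def by auto
      next
        case False thus ?thesis using u gz \<open>g = \<gamma>\<close> unfolding E2_def by auto
      qed
    next
      case False
      hence "x \<in> (\<Union>g\<in>\<Gamma>-{\<gamma>}. g ` sphere 0 1)" using gz by blast
      thus ?thesis unfolding E2_def by blast
    qed
  qed
  have EE: "E1 \<inter> E2 \<subseteq> {a,b}"
  proof
    fix x assume x: "x \<in> E1 \<inter> E2"
    then obtain u where u: "0 \<le> u" "u \<le> \<delta>" "x = \<gamma> (cis (\<alpha>+u))" unfolding E1_def by auto
    have xg: "x \<in> \<gamma> ` sphere 0 1" using u(3) cs by auto
    show "x \<in> {a,b}"
    proof (cases "x \<in> \<gamma> ` (\<lambda>u. cis(\<alpha>+u)) ` {\<delta>..2*pi}")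
      case True
      then obtain v where v: "\<delta> \<le> v" "v \<le> 2*pi" "x = \<gamma> (cis (\<alpha>+v))" by auto
      have "cis (\<alpha>+u) = cis (\<alpha>+v)" by (rule inj_onD[OF injg]) (use u v in auto)
      hence cuv: "cis u = cis v" by (rule cis_shift_eq)
      show ?thesis
      proof (cases "v = 2*pi")
        case True
        hence c0: "cis u = cis 0" using cuv by simp
        show ?thesis
        proof (cases "u < 2*pi")
          case True
          hence "u = 0" using cis_inj02[OF u(1) True _ _ c0] by simp
          thus ?thesis using u(3) ab(1) by simp
        next
          case False
          hence "u = \<delta>" using u ab(3) by linarith
          thus ?thesis using u(3) ab(4) by simp
        qed
      next
        case False
        hence "u = v" using cis_inj02[OF u(1) _ _ _ cuv] u v ab(2,3) by linarith
        hence "u = \<delta>" using u v by linarith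
        thus ?thesis using u(3) ab(4) by simp
      qed
    next
      case False
      then obtain g where "g \<in> \<Gamma>" "g \<noteq> \<gamma>" "x \<in> g ` sphere 0 1" using x unfolding E2_def by auto
      thus ?thesis using assms(4)[OF \<open>g \<in> \<Gamma>\<close> assms(9)] xg by blast
    qed
  qed
  have pE1: "p \<in> E1" unfolding E1_def using ab by auto
  have sE2: "s \<in> E2" if "s \<in> S" "s \<noteq> a" "s \<noteq> b" for s
  proof (rule ccontr)
    assume "s \<notin> E2"
    hence "s \<in> E1" using that S(2) CE by blast
    then obtain u where u: "0 \<le> u" "u \<le> \<delta>" "s = \<gamma> (cis (\<alpha>+u))" unfolding E1_def by auto
    have "u \<noteq> 0" using u(3) ab(1) that by auto
    moreover have "u \<noteq> \<delta>" using u(3) ab(4) that by auto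
    ultimately have "0 < u" "u < \<delta>" using u by auto
    hence "s \<in> open_arc \<gamma> a b" unfolding open_arc_def
      using u(3) ab(1-4) by blast
    thus False using disj that(1) by blast
  qed
  have lfs0: "0 \<le> lfs C p" unfolding lfs_def by (rule infdist_nonneg)
  have lt: "infdist p S < lfs C p"
  proof -
    have "infdist p S < \<epsilon> * lfs C p" using S(3) pC by blast
    also have "\<dots> \<le> lfs C p" using mult_right_mono[OF assms(8) lfs0] by simp
    finally show ?thesis .
  qed
  have key: False if "s \<in> S - {a,b}" "dist p s \<le> dist p a" "dist p s \<le> dist p b" "dist p s < lfs C p" for s
    by (rule key_contra[OF compC pC _ _ _ that(2,3,4) clE1 clE2 CE EE pE1 sE2])
       (use that S(2) in auto)
  obtain s0 where s0: "s0 \<in> S" "infdist p S = dist p s0"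
    using infdist_attains_inf[OF finite_imp_closed[OF S(1)], of p] aS by blast
  have gt: "min (dist p a) (dist p b) < dist p s" if "s \<in> S - {a,b}" for s
  proof (rule ccontr)
    assume "\<not> ?thesis"
    hence le: "dist p s \<le> dist p a" "dist p s \<le> dist p b" by auto
    have "dist p s0 \<le> dist p s" using s0 infdist_le[of s S p] that by auto
    show False
    proof (cases "s0 \<in> {a,b}")
      case True
      hence "dist p s \<le> dist p s0" using le by auto
      thus False using key[OF that le] s0 lt \<open>dist p s0 \<le> dist p s\<close> by linarith
    next
      case False
      thus False using key[of s0] s0 lt le \<open>dist p s0 \<le> dist p s\<close> by auto
    qed
  qed
  have eq: "infdist p S = min (dist p a) (dist p b)"
  proof -
    have "infdist p S \<le> min (dist p a) (dist p b)" using infdist_le[OF aS(1)] infdist_le[OF aS(2)] by auto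
    moreover have "min (dist p a) (dist p b) \<le> dist p s0"
      using gt[of s0] s0(1) by (cases "s0 \<in> {a,b}") auto
    ultimately show ?thesis using s0 by linarith
  qed
  show ?thesis using eq gt by auto
qed

end
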